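(* Let $\{x^k\}$ be generated by Algorithm IRG with the backtracking stepsize rule and $\theta<\mu$. Assume $\rho_k\to0$, that $\{x^k\}$ has an accumulation point $\bar x$, and that $f$ satisfies the KL property at $\bar x$. Then $\bar x$ is a stationary point of $f$ and $x^k\to\bar x$ as $k\to\infty$.
   Context: Algorithm IRG (general inexact reduced gradient framework). Let $f:\mathbb R^n\to\mathbb R$ be continuously differentiable. Parameters: initial point $x^1\in\mathbb R^n$, initial radii $\varepsilon_1>0$, $r_1>0$, reduction factors $\mu,\theta\in(0,1)$, and a sequence $\{\rho_k\}$ of positive numbers. For $k=1,2,\dots$: (1) choose $g^k\in\mathbb R^n$ with $\|g^k-\nabla f(x^k)\|\le\min\{\varepsilon_k,\rho_k\}$; (2) if $\|g^k\|\le r_k+\varepsilon_k$, set $r_{k+1}=\mu r_k$, $\varepsilon_{k+1}=\theta\varepsilon_k$, $d^k=0$; otherwise set $r_{k+1}=r_k$, $\varepsilon_{k+1}=\varepsilon_k$ and $d^k=-\frac{\|g^k\|-\varepsilon_k}{\|g^k\|}g^k$; (3) choose a stepsize $t_k>0$ by some rule; (4) set $x^{k+1}=x^k+t_kd^k$. Backtracking stepsize rule: fix $\beta,\gamma,\tau\in(0,1)$; if $d^k=0$ set $t_k=\tau$; otherwise $t_k=\max\{t\in\{1,\gamma,\gamma^2,\dots\}: f(x^k+td^k)\le f(x^k)-\beta t\|d^k\|^2\}$. KL property: $f$ satisfies the KL property at $\bar x$ if there exist $\eta>0$, a neighborhood $U$ of $\bar x$, and a nondecreasing function $\psi:(0,\eta)\to(0,\infty)$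 such that $1/\psi$ is integrable over $(0,\eta)$ and $\|\nabla f(x)\|\ge\psi(f(x)-f(\bar x))$ for all $x\in U$ with $f(\bar x)<f(x)<f(\bar x)+\eta$. *)

theory Defs
  imports "HOL-Analysis.Analysis"
begin

definition C1_with_gradient :: "('a::euclidean_space \<Rightarrow> real) \<Rightarrow> ('a \<Rightarrow> 'a) \<Rightarrow> bool" where
  "C1_with_gradient f grad \<longleftrightarrow>
     (\<forall>x. (f has_derivative (\<lambda>h. grad x \<bullet> h)) (at x)) \<and> continuous_on UNIV grad"

definition KL_property :: "('a::euclidean_space \<Rightarrow> real) \<Rightarrow> ('a \<Rightarrow> 'a) \<Rightarrow> 'a \<Rightarrow> bool" where
  "KL_property f grad xbar \<longleftrightarrow>
     (\<exists>\<eta>>0. \<exists>U. open U \<and> xbar \<in> U \<and> (\<exists>\<psi>::real \<Rightarrow> real.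
        mono_on {0<..<\<eta>} \<psi> \<and> (\<forall>s\<in>{0<..<\<eta>}. \<psi> s > 0) \<and>
        (\<lambda>s. 1 / \<psi> s) integrable_on {0<..<\<eta>} \<and>
        (\<forall>x\<in>U. f xbar < f x \<and> f x < f xbar + \<eta> \<longrightarrow> norm (grad x) \<ge> \<psi> (f x - f xbar))))"

definition armijo :: "('a::real_normed_vector \<Rightarrow> real) \<Rightarrow> real \<Rightarrow> 'a \<Rightarrow> 'a \<Rightarrow> real \<Rightarrow> bool" where
  "armijo f \<beta> xk dk s \<longleftrightarrow> f (xk + s *\<^sub>R dk) \<le> f xk - \<beta> * s * (norm dk)^2"

definition IRG_backtracking ::
  "('a::euclidean_space \<Rightarrow> real) \<Rightarrow> ('a \<Rightarrow> 'a) \<Rightarrow> real \<Rightarrow> real \<Rightarrow> real \<Rightarrow> real \<Rightarrow> real \<Rightarrow>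
   (nat \<Rightarrow> real) \<Rightarrow> (nat \<Rightarrow> 'a) \<Rightarrow> (nat \<Rightarrow> 'a) \<Rightarrow> (nat \<Rightarrow> real) \<Rightarrow> (nat \<Rightarrow> real) \<Rightarrow>
   (nat \<Rightarrow> 'a) \<Rightarrow> (nat \<Rightarrow> real) \<Rightarrow> bool" where
  "IRG_backtracking f grad \<mu> \<theta> \<beta> \<gamma> \<tau> \<rho> x g \<epsilon> r d t \<longleftrightarrow>
     \<epsilon> 0 > 0 \<and> r 0 > 0 \<and> 0 < \<mu> \<and> \<mu> < 1 \<and> 0 < \<theta> \<and> \<theta> < 1 \<and>
     0 < \<beta> \<and> \<beta> < 1 \<and> 0 < \<gamma> \<and> \<gamma> < 1 \<and> 0 < \<tau> \<and> \<tau> < 1 \<and>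
     (\<forall>k. \<rho> k > 0) \<and>
     (\<forall>k. norm (g k - grad (x k)) \<le> min (\<epsilon> k) (\<rho> k)) \<and>
     (\<forall>k. if norm (g k) \<le> r k + \<epsilon> k
          then r (Suc k) = \<mu> * r k \<and> \<epsilon> (Suc k) = \<theta> * \<epsilon> k \<and> d k = 0
          else r (Suc k) = r k \<and> \<epsilon> (Suc k) = \<epsilon> k \<and>
               d k = - ((norm (g k) - \<epsilon> k) / norm (g k)) *\<^sub>R g k) \<and>
     (\<forall>k. if d k = 0 then t k = \<tau>
          else (\<exists>j::nat. t k = \<gamma> ^ j \<and> armijo f \<beta> (x k) (d k) (t k) \<and>
                         (\<forall>i<j. \<not> armijo f \<beta> (x k) (d k) (\<gamma> ^ i)))) \<and>
     (\<forall>k. x (Suc k) = x k + t k *\<^sub>R d k)"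

end

theory Submission
  imports Defs
begin

locale irg =
  fixes f :: "'a::euclidean_space \<Rightarrow> real" and grad :: "'a \<Rightarrow> 'a"
    and x g d :: "nat \<Rightarrow> 'a" and \<epsilon> r t \<rho> :: "nat \<Rightarrow> real"
    and \<mu> \<theta> \<beta> \<gamma> \<tau> :: real
  assumes C1: "C1_with_gradient f grad"
    and A: "IRG_backtracking f grad \<mu> \<theta> \<beta> \<gamma> \<tau> \<rho> x g \<epsilon> r d t"
    and thmu: "\<theta> < \<mu>"
begin

lemma params: "\<epsilon> 0 > 0" "r 0 > 0" "0 < \<mu>" "\<mu> < 1" "0 < \<theta>" "\<theta> < 1"
   "0 < \<beta>" "\<beta> < 1" "0 < \<gamma>" "\<gamma> < 1" "0 < \<tau>" "\<tau> < 1"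
  using A unfolding IRG_backtracking_def by auto

lemma gerr: "norm (g k - grad (x k)) \<le> \<epsilon> k"
  using A unfolding IRG_backtracking_def by auto

lemma stepc: "if norm (g k) \<le> r k + \<epsilon> k
          then r (Suc k) = \<mu> * r k \<and> \<epsilon> (Suc k) = \<theta> * \<epsilon> k \<and> d k = 0
          else r (Suc k) = r k \<and> \<epsilon> (Suc k) = \<epsilon> k \<and>
               d k = - ((norm (g k) - \<epsilon> k) / norm (g k)) *\<^sub>R g k"
  using A unfolding IRG_backtracking_def by auto

lemma tc: "if d k = 0 then t k = \<tau>
          else (\<exists>j::nat. t k = \<gamma> ^ j \<and> armijo f \<beta> (x k) (d k) (t k) \<and>
                         (\<forall>i<j. \<not> armijo f \<beta> (x k) (d k) (\<gamma> ^ i)))"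
  using A unfolding IRG_backtracking_def by auto

lemma xstep: "x (Suc k) = x k + t k *\<^sub>R d k"
  using A unfolding IRG_backtracking_def by auto

lemma pos: "\<epsilon> k > 0 \<and> r k > 0"
proof (induction k)
  case 0 then show ?case using params by auto
next
  case (Suc k)
  then show ?case using stepc[of k] params by (auto split: if_splits)
qed

lemma ratio: "\<epsilon> k * r 0 \<le> \<epsilon> 0 * r k"
proof (induction k)
  case 0 then show ?case by simp
next
  case (Suc k)
  show ?case
  proof (cases "norm (g k) \<le> r k + \<epsilon> k")
    case True
    then have e: "r (Suc k) = \<mu> * r k" "\<epsilon> (Suc k) = \<theta> * \<epsilon> k" using stepc[of k] by auto
    have "\<theta> * (\<epsilon> k * r 0) \<le> \<theta> * (\<epsilon> 0 * r k)" using Suc params by (simp add: mult_left_mono)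
    moreover have "\<theta> * (\<epsilon> 0 * r k) \<le> \<mu> * (\<epsilon> 0 * r k)"
      using thmu pos[of k] params by (intro mult_right_mono) auto
    ultimately show ?thesis using e by (simp add: algebra_simps)
  next
    case False
    then show ?thesis using stepc[of k] Suc by auto
  qed
qed

lemma tpos: "0 < t k \<and> t k \<le> 1"
proof (cases "d k = 0")
  case True then show ?thesis using tc[of k] params by auto
next
  case False
  then obtain j where "t k = \<gamma> ^ j" using tc[of k] by auto
  then show ?thesis using params by (simp add: power_le_one)
qed

lemma descent: "f (x (Suc k)) \<le> f (x k) - \<beta> * t k * (norm (d k))^2"
proof (cases "d k = 0")
  case True then show ?thesis using xstep[of k] by simp
next
  case False
  then have "armijo f \<beta> (x k) (d k) (t k)" using tc[of k] by auto
  then show ?thesis using xstep[of k] unfolding armijo_def by simp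
qed

lemma null_iff: "d k = 0 \<longleftrightarrow> norm (g k) \<le> r k + \<epsilon> k"
proof
  assume "d k = 0"
  show "norm (g k) \<le> r k + \<epsilon> k"
  proof (rule ccontr)
    assume n: "\<not> ?thesis"
    then have dk: "d k = - ((norm (g k) - \<epsilon> k) / norm (g k)) *\<^sub>R g k" using stepc[of k] by auto
    have "norm (g k) > \<epsilon> k" using n pos[of k] by auto
    moreover have "\<epsilon> k > 0" using pos by auto
    ultimately have gp: "norm (g k) > 0" "norm (g k) - \<epsilon> k > 0" by auto
    then have "(norm (g k) - \<epsilon> k) / norm (g k) > 0" "g k \<noteq> 0" by (auto intro: divide_pos_pos)
    then have "d k \<noteq> 0" using dk gp by simp
    then show False using \<open>d k = 0\<close> by simp
  qed
next
  assume "norm (g k) \<le> r k + \<epsilon> k"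
  then show "d k = 0" using stepc[of k] by auto
qed

definition "C = 1 + 2 * \<epsilon> 0 / r 0"

lemma nonnull:
  assumes "d k \<noteq> 0"
  shows "norm (d k) > r k" "norm (grad (x k)) \<le> C * norm (d k)"
    "grad (x k) \<bullet> d k \<le> - ((norm (d k))^2)" "norm (d k) \<le> norm (grad (x k))"
    "r (Suc k) = r k" "\<epsilon> (Suc k) = \<epsilon> k"
proof -
  define G where "G = norm (g k)"
  define e where "e = \<epsilon> k"
  have n: "\<not> G \<le> r k + e" using assms null_iff G_def e_def by auto
  then have dk: "d k = - ((G - e) / G) *\<^sub>R g k" and rr: "r (Suc k) = r k" "\<epsilon> (Suc k) = \<epsilon> k"
    using stepc[of k] G_def e_def by auto
  show "r (Suc k) = r k" "\<epsilon> (Suc k) = \<epsilon> k" by (fact rr)+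
  have ep: "e > 0" "r k > 0" using pos[of k] e_def by auto
  have Gp: "G > 0" "G - e > r k" using n ep by auto
  have nd: "norm (d k) = G - e"
    using dk Gp ep by (simp add: G_def)
  show "norm (d k) > r k" using nd Gp by simp
  have ge: "norm (grad (x k) - g k) \<le> e" using gerr[of k] e_def by (simp add: norm_minus_commute)
  have ng1: "norm (grad (x k)) \<le> G + e"
    using norm_triangle_ineq[of "g k" "grad (x k) - g k"] ge G_def by simp
  have ng2: "G \<le> norm (grad (x k)) + e"
    using norm_triangle_ineq[of "grad (x k)" "g k - grad (x k)"] ge G_def
    by (simp add: norm_minus_commute)
  show "norm (d k) \<le> norm (grad (x k))" using nd ng2 by simp
  have er: "e * r 0 \<le> \<epsilon> 0 * r k" using ratio e_def by simp
  have "e * r 0 \<le> \<epsilon> 0 * norm (d k)"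
    using er \<open>norm (d k) > r k\<close> params(1) by (smt (verit) mult_left_mono)
  then have e2: "e \<le> \<epsilon> 0 / r 0 * norm (d k)" using params(2) by (simp add: field_simps)
  have "norm (grad (x k)) \<le> norm (d k) + 2 * e" using ng1 nd by simp
  also have "\<dots> \<le> norm (d k) + 2*(\<epsilon> 0 / r 0 * norm (d k))" using e2 by simp
  also have "\<dots> = C * norm (d k)" unfolding C_def by (simp add: algebra_simps)
  finally show "norm (grad (x k)) \<le> C * norm (d k)" .
  have cs: "(grad (x k) - g k) \<bullet> g k \<ge> - (e * G)"
  proof -
    have "\<bar>(grad (x k) - g k) \<bullet> g k\<bar> \<le> norm (grad (x k) - g k) * G"
      using Cauchy_Schwarz_ineq2 G_def by blast
    also have "\<dots> \<le> e * G" using ge Gp by (simp add: mult_right_mono)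
    finally show ?thesis by linarith
  qed
  have gg: "grad (x k) \<bullet> g k \<ge> G * G - e * G"
  proof -
    have "grad (x k) \<bullet> g k = g k \<bullet> g k + (grad (x k) - g k) \<bullet> g k" by (simp add: inner_diff_left)
    moreover have "g k \<bullet> g k = G * G" using G_def by (metis power2_norm_eq_inner power2_eq_square)
    ultimately show ?thesis using cs by simp
  qed
  have c0: "(G - e) / G \<ge> 0" using Gp ep by simp
  have "grad (x k) \<bullet> d k = - ((G - e) / G) * (grad (x k) \<bullet> g k)" using dk by simp
  also have "\<dots> \<le> - ((G - e) / G) * (G * G - e * G)"
    using mult_left_mono[OF gg c0] by linarith
  also have "\<dots> = - ((G - e)^2)" using Gp by (simp add: field_simps power2_eq_square)
  finally show "grad (x k) \<bullet> d k \<le> - ((norm (d k))^2)" using nd by simp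
qed

lemma Fdec: "f (x (Suc k)) \<le> f (x k)"
proof -
  have "0 \<le> \<beta> * t k * (norm (d k))^2" using params tpos[of k] by simp
  then show ?thesis using descent[of k] by linarith
qed

lemma Fmono: "k \<le> m \<Longrightarrow> f (x m) \<le> f (x k)"
  by (rule lift_Suc_antimono_le[of "\<lambda>k. f (x k)"]) (use Fdec in auto)

lemma contf: "isCont f y"
proof -
  have "(f has_derivative (\<lambda>h. grad y \<bullet> h)) (at y)" using C1 unfolding C1_with_gradient_def by auto
  then show ?thesis by (rule has_derivative_continuous)
qed

lemma contg: "isCont grad y"
  using C1 continuous_on_eq_continuous_at[OF open_UNIV, of grad]
  unfolding C1_with_gradient_def by auto

lemma Cpos: "C > 0"
  using params unfolding C_def by (simp add: add_pos_nonneg)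

lemma conv:
  assumes sm: "strict_mono s" and lim: "(x \<circ> s) \<longlonglongrightarrow> xbar" and KL: "KL_property f grad xbar"
  shows "x \<longlonglongrightarrow> xbar"
proof -
  define fs where "fs = f xbar"
  have Fs: "(\<lambda>j. f (x (s j))) \<longlonglongrightarrow> fs"
    using isCont_tendsto_compose[OF contf lim] unfolding fs_def o_def by simp
  have Fge: "fs \<le> f (x k)" for k
  proof (rule LIMSEQ_le_const2[OF Fs])
    show "\<exists>N. \<forall>n\<ge>N. f (x (s n)) \<le> f (x k)"
    proof (intro exI allI impI)
      fix n assume "k \<le> n"
      then have "k \<le> s n" using seq_suble[OF sm, of n] by linarith
      then show "f (x (s n)) \<le> f (x k)" by (rule Fmono)
    qed
  qed
  have Fsmall: "\<exists>M. \<forall>k\<ge>M. f (x k) - fs < e" if e: "e > 0" for e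
  proof -
    obtain j where "\<forall>n\<ge>j. norm (f (x (s n)) - fs) < e" using LIMSEQ_D[OF Fs e] by blast
    then have "f (x (s j)) - fs < e" by auto
    then show ?thesis using Fmono by (meson diff_right_mono le_less_trans)
  qed
  obtain \<eta> U \<psi> where eta: "\<eta> > 0" and oU: "open U" and xU: "xbar \<in> U"
    and mono: "mono_on {0<..<\<eta>} \<psi>" and ppos: "\<forall>s\<in>{0<..<\<eta>}. \<psi> s > 0"
    and int: "(\<lambda>s. 1 / \<psi> s) integrable_on {0<..<\<eta>}"
    and kl: "\<forall>y\<in>U. fs < f y \<and> f y < fs + \<eta> \<longrightarrow> norm (grad y) \<ge> \<psi> (f y - fs)"
    using KL unfolding KL_property_def fs_def by blast
  define h where "h = (\<lambda>s. 1 / \<psi> s)"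
  have hint0: "h integrable_on {0..<\<eta>}"
  proof (rule integrable_spike_set[OF int[folded h_def]])
    show "negligible {x \<in> {0<..<\<eta>} - {0..<\<eta>}. h x \<noteq> 0}"
      by (rule negligible_subset[of "{}"]) auto
    show "negligible {x \<in> {0..<\<eta>} - {0<..<\<eta>}. h x \<noteq> 0}"
      by (rule negligible_subset[of "{0}"]) auto
  qed
  have hint: "h integrable_on {a..c}" if "c < \<eta>" "0 \<le> a" for a c
    by (rule integrable_on_subinterval[OF hint0]) (use that in auto)
  define \<phi> where "\<phi> c = integral {0..c} h" for c
  have key: "(a - b) / \<psi> a \<le> \<phi> a - \<phi> b" if ab: "0 \<le> b" "b \<le> a" "a < \<eta>" "0 < a" for a b
  proof -
    have comb: "\<phi> b + integral {b..a} h = \<phi> a"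
      unfolding \<phi>_def by (rule Henstock_Kurzweil_Integration.integral_combine) (use ab hint in auto)
    define h2 where "h2 u = (if u = b then 1 / \<psi> a else h u)" for u
    have hba: "h integrable_on {b..a}" using hint ab by auto
    have i2: "h2 integrable_on {b..a}"
      by (rule integrable_spike[OF hba, of "{b}"]) (auto simp: h2_def)
    have e2: "integral {b..a} h2 = integral {b..a} h"
      by (rule integral_spike[where S="{b}"]) (auto simp: h2_def)
    have pw: "1 / \<psi> a \<le> h2 u" if u: "u \<in> {b..a}" for u
    proof (cases "u = b")
      case True then show ?thesis by (simp add: h2_def)
    next
      case False
      then have u0: "u \<in> {0<..<\<eta>}" "a \<in> {0<..<\<eta>}" using u ab by auto
      have "\<psi> u \<le> \<psi> a" by (rule mono_onD[OF mono u0]) (use u in auto)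
      moreover have "\<psi> u > 0" using ppos u0 by auto
      ultimately show ?thesis using False by (simp add: h2_def h_def frac_le)
    qed
    have "integral {b..a} (\<lambda>u. 1 / \<psi> a) \<le> integral {b..a} h2"
      by (rule integral_le) (use i2 pw in auto)
    moreover have "integral {b..a} (\<lambda>u. 1 / \<psi> a) = (a - b) / \<psi> a"
      using ab by (simp add: content_real)
    ultimately show ?thesis using comb e2 by linarith
  qed
  have phi0: "\<phi> 0 = 0" unfolding \<phi>_def by simp
  have phinn: "0 \<le> \<phi> c" if "0 \<le> c" "c < \<eta>" for c
  proof (cases "c = 0")
    case True then show ?thesis using phi0 by simp
  next
    case False
    then have "c / \<psi> c \<le> \<phi> c - \<phi> 0" using key[of 0 c] that by auto
    moreover have "\<psi> c > 0" using ppos that False by auto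
    ultimately show ?thesis using phi0 that by (smt (verit) divide_nonneg_pos)
  qed
  have phimono: "\<phi> b \<le> \<phi> a" if "0 \<le> b" "b \<le> a" "a < \<eta>" for a b
  proof (cases "a = b")
    case True then show ?thesis by simp
  next
    case False
    then have "(a - b) / \<psi> a \<le> \<phi> a - \<phi> b" using key[of b a] that by auto
    moreover have "\<psi> a > 0" using ppos that False by auto
    ultimately show ?thesis using that by (smt (verit) divide_nonneg_pos)
  qed
  have phicont: "continuous_on {0..\<eta>/2} \<phi>"
    unfolding \<phi>_def by (rule indefinite_integral_continuous_1) (rule hint, use eta in auto)
  obtain K0 where K0: "\<forall>k\<ge>K0. f (x k) - fs < \<eta>" using Fsmall eta by blast
  define \<Phi> where "\<Phi> k = C / \<beta> * \<phi> (f (x k) - fs)" for k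
  have Cb: "C / \<beta> > 0" using Cpos params by simp
  have Phinn: "0 \<le> \<Phi> k" if "k \<ge> K0" for k
    unfolding \<Phi>_def using phinn[of "f (x k) - fs"] Fge[of k] K0 that Cb
    by (metis diff_ge_0_iff_ge less_eq_real_def zero_le_mult_iff)
  have Phimono: "\<Phi> (Suc k) \<le> \<Phi> k" if "k \<ge> K0" for k
  proof -
    have "\<phi> (f (x (Suc k)) - fs) \<le> \<phi> (f (x k) - fs)"
      using phimono[of "f (x (Suc k)) - fs" "f (x k) - fs"] Fge[of "Suc k"] Fdec[of k] K0 that by simp
    then show ?thesis unfolding \<Phi>_def using Cb by (intro mult_left_mono) auto
  qed
  have Phismall: "\<exists>M. \<forall>k\<ge>M. \<Phi> k < e" if e: "e > 0" for e
  proof -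
    have "e / (C / \<beta>) > 0" using e Cb by (rule divide_pos_pos)
    then obtain \<delta> where dp: "\<delta> > 0" and dd: "\<forall>c\<in>{0..\<eta>/2}. dist c 0 < \<delta> \<longrightarrow> dist (\<phi> c) (\<phi> 0) < e / (C / \<beta>)"
      using phicont eta unfolding continuous_on_iff by (metis atLeastAtMost_iff half_gt_zero less_eq_real_def)
    obtain M where M: "\<forall>k\<ge>M. f (x k) - fs < min \<delta> (\<eta>/2)" using Fsmall[of "min \<delta> (\<eta>/2)"] dp eta by auto
    show ?thesis
    proof (intro exI allI impI)
      fix k assume "M \<le> k"
      then have c: "f (x k) - fs \<in> {0..\<eta>/2}" "dist (f (x k) - fs) 0 < \<delta>" using M Fge[of k] by (auto simp: dist_real_def)
      then have "\<phi> (f (x k) - fs) < e / (C / \<beta>)" using dd phi0 by (auto simp: dist_real_def)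
      then show "\<Phi> k < e" unfolding \<Phi>_def using Cpos params(7) by (simp add: field_simps)
    qed
  qed
  have stepb: "norm (x (Suc k) - x k) \<le> \<Phi> k - \<Phi> (Suc k)" if kK: "k \<ge> K0" and xk: "x k \<in> U" for k
  proof (cases "d k = 0")
    case True
    then show ?thesis using xstep[of k] Phimono[OF kK] by simp
  next
    case False
    define nd where "nd = norm (d k)"
    have ndp: "nd > 0" using False nd_def by simp
    have tk: "0 < t k" "t k \<le> 1" using tpos by auto
    have nx: "norm (x (Suc k) - x k) = t k * nd" using xstep[of k] tk nd_def by simp
    define a where "a = f (x k) - fs"
    define b where "b = f (x (Suc k)) - fs"
    have dec: "\<beta> * t k * nd^2 \<le> a - b" using descent[of k] a_def b_def nd_def by simp
    have pp: "\<beta> * t k * nd^2 > 0" using params tk ndp by simp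
    have b0: "0 \<le> b" using Fge b_def by simp
    have ab: "b < a" using dec pp by simp
    have aeta: "a < \<eta>" using K0 kK a_def by simp
    have "\<psi> a \<le> norm (grad (x k))" using kl xk a_def b0 ab aeta by auto
    also have "\<dots> \<le> C * nd" using nonnull(2)[OF False] nd_def by simp
    finally have psiC: "\<psi> a \<le> C * nd" .
    have psip: "\<psi> a > 0" using ppos aeta b0 ab by auto
    have kk: "(a - b) / \<psi> a \<le> \<phi> a - \<phi> b" using key[of b a] b0 ab aeta by auto
    then have "a - b \<le> \<psi> a * (\<phi> a - \<phi> b)" using psip by (simp add: field_simps)
    also have "\<dots> \<le> C * nd * (\<phi> a - \<phi> b)"
    proof (rule mult_right_mono[OF psiC])
      show "0 \<le> \<phi> a - \<phi> b" using phimono[of b a] b0 ab aeta by simp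
    qed
    finally have "\<beta> * t k * nd^2 \<le> C * nd * (\<phi> a - \<phi> b)" using dec by linarith
    then have "nd * (\<beta> * (t k * nd)) \<le> nd * (C * (\<phi> a - \<phi> b))"
      by (simp add: power2_eq_square algebra_simps)
    then have "\<beta> * (t k * nd) \<le> C * (\<phi> a - \<phi> b)" using ndp by simp
    then have "t k * nd \<le> C / \<beta> * (\<phi> a - \<phi> b)" using params by (simp add: field_simps)
    then show ?thesis using nx unfolding \<Phi>_def a_def b_def by (simp add: algebra_simps)
  qed
  obtain \<delta>0 where d0: "\<delta>0 > 0" "ball xbar \<delta>0 \<subseteq> U" using oU xU open_contains_ball by blast
  have d2: "\<delta>0 / 2 > 0" using d0 by simp
  obtain M1 where M1: "\<forall>k\<ge>M1. \<Phi> k < \<delta>0 / 2" using Phismall[OF d2] by blast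
  obtain j0 where j0: "\<forall>j\<ge>j0. norm ((x \<circ> s) j - xbar) < \<delta>0 / 2" using LIMSEQ_D[OF lim, of "\<delta>0/2"] d0 by auto
  define K where "K = s (max j0 (max K0 M1))"
  have Kge: "K \<ge> K0" "K \<ge> M1" using seq_suble[OF sm, of "max j0 (max K0 M1)"] unfolding K_def by auto
  have xK: "norm (x K - xbar) < \<delta>0 / 2" using j0 unfolding K_def by auto
  have PK: "\<Phi> K < \<delta>0 / 2" using M1 Kge by auto
  have P: "norm (x (K + m) - x K) \<le> \<Phi> K - \<Phi> (K + m)" for m
  proof (induction m)
    case 0 then show ?case by simp
  next
    case (Suc m)
    have "\<Phi> (K + m) \<ge> 0" using Phinn Kge by auto
    moreover have "norm (x (K + m) - xbar) \<le> norm (x (K + m) - x K) + norm (x K - xbar)"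
      using norm_triangle_ineq[of "x (K + m) - x K" "x K - xbar"] by simp
    ultimately have "norm (x (K + m) - xbar) < \<delta>0" using Suc.IH xK PK by linarith
    then have "dist xbar (x (K + m)) < \<delta>0" by (metis dist_commute dist_norm)
    then have "x (K + m) \<in> ball xbar \<delta>0" by simp
    then have xu: "x (K + m) \<in> U" using d0(2) by blast
    have "K0 \<le> K + m" using Kge by simp
    from this xu have "norm (x (Suc (K + m)) - x (K + m)) \<le> \<Phi> (K + m) - \<Phi> (Suc (K + m))"
      by (rule stepb)
    then show ?case using Suc norm_triangle_ineq[of "x (Suc (K + m)) - x (K + m)" "x (K + m) - x K"]
      by simp
  qed
  have inU: "x n \<in> U" if nK: "n \<ge> K" for n
  proof -
    obtain m where n: "n = K + m" using le_Suc_ex[OF nK] by blast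
    have "\<Phi> (K + m) \<ge> 0" using Phinn Kge by auto
    moreover have "norm (x (K + m) - xbar) \<le> norm (x (K + m) - x K) + norm (x K - xbar)"
      using norm_triangle_ineq[of "x (K + m) - x K" "x K - xbar"] by simp
    ultimately have "norm (x (K + m) - xbar) < \<delta>0" using P[of m] xK PK by linarith
    then have "dist xbar (x (K + m)) < \<delta>0" by (metis dist_commute dist_norm)
    then have "x n \<in> ball xbar \<delta>0" using n by simp
    then show ?thesis using d0(2) by (rule subsetD[rotated])
  qed
  have Q: "norm (x (n + i) - x n) \<le> \<Phi> n - \<Phi> (n + i)" if "n \<ge> K" for n i
  proof (induction i)
    case 0 then show ?case by simp
  next
    case (Suc i)
    have "K0 \<le> n + i" using Kge that by simp
    moreover have "x (n + i) \<in> U" using inU that by simp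
    ultimately have "norm (x (Suc (n + i)) - x (n + i)) \<le> \<Phi> (n + i) - \<Phi> (Suc (n + i))"
      by (rule stepb)
    then show ?case using Suc norm_triangle_ineq[of "x (Suc (n + i)) - x (n + i)" "x (n + i) - x n"]
      by simp
  qed
  have bound: "norm (x n - xbar) \<le> \<Phi> n" if "n \<ge> K" for n
  proof -
    have lim2: "(\<lambda>j. norm (x (s j) - x n)) \<longlonglongrightarrow> norm (xbar - x n)"
      using lim by (intro tendsto_intros) (simp add: o_def)
    have "norm (xbar - x n) \<le> \<Phi> n"
    proof (rule LIMSEQ_le_const2[OF lim2], intro exI allI impI)
      fix j assume "n \<le> j"
      then have sj: "n \<le> s j" using seq_suble[OF sm, of j] by linarith
      then obtain i where i: "s j = n + i" using le_Suc_ex by blast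
      have "\<Phi> (s j) \<ge> 0" using Phinn Kge that sj by auto
      then show "norm (x (s j) - x n) \<le> \<Phi> n" using Q[OF that, of i] i by simp
    qed
    then show ?thesis by (metis norm_minus_commute)
  qed
  show ?thesis
  proof (rule LIMSEQ_I)
    fix e :: real assume "0 < e"
    then obtain M where M: "\<forall>k\<ge>M. \<Phi> k < e" using Phismall by blast
    show "\<exists>no. \<forall>n\<ge>no. norm (x n - xbar) < e"
    proof (intro exI allI impI)
      fix n assume "max M K \<le> n"
      then show "norm (x n - xbar) < e" using M bound[of n] by fastforce
    qed
  qed
qed

lemma rdec: "r (Suc k) \<le> r k" "\<epsilon> (Suc k) \<le> \<epsilon> k"
proof -
  have p: "r k > 0" "\<epsilon> k > 0" using pos[of k] by auto
  show "r (Suc k) \<le> r k"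
    using stepc[of k] p params by (auto split: if_splits)
  show "\<epsilon> (Suc k) \<le> \<epsilon> k"
    using stepc[of k] p params by (auto split: if_splits)
qed

lemma rmono: "k \<le> m \<Longrightarrow> r m \<le> r k" "k \<le> m \<Longrightarrow> \<epsilon> m \<le> \<epsilon> k"
  by (rule lift_Suc_antimono_le[of r], use rdec in auto)
     (rule lift_Suc_antimono_le[of \<epsilon>], use rdec in auto)

lemma fderiv_line:
  "((\<lambda>u. f (y + u *\<^sub>R v)) has_field_derivative (grad (y + z *\<^sub>R v) \<bullet> v)) (at z)"
proof -
  have a: "((\<lambda>u. y + u *\<^sub>R v) has_derivative (\<lambda>u. u *\<^sub>R v)) (at z)"
    by (auto intro!: derivative_eq_intros)
  have b: "(f has_derivative (\<lambda>h. grad (y + z *\<^sub>R v) \<bullet> h)) (at (y + z *\<^sub>R v))"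
    using C1 unfolding C1_with_gradient_def by auto
  have c: "((\<lambda>u. f (y + u *\<^sub>R v)) has_derivative (\<lambda>u. grad (y + z *\<^sub>R v) \<bullet> (u *\<^sub>R v))) (at z)"
    using has_derivative_compose[OF a b] by simp
  have eq: "(\<lambda>u. grad (y + z *\<^sub>R v) \<bullet> (u *\<^sub>R v)) = (*) (grad (y + z *\<^sub>R v) \<bullet> v)"
    by (auto simp: fun_eq_iff)
  show ?thesis using c unfolding has_field_derivative_def eq .
qed

lemma infnull:
  assumes xl: "x \<longlonglongrightarrow> xbar"
  shows "\<exists>k\<ge>N. d k = 0"
proof (rule ccontr)
  assume "\<not> ?thesis"
  then have nn: "d k \<noteq> 0" if "k \<ge> N" for k using that by auto
  have rc: "r k = r N" if "k \<ge> N" for k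
    using that
  proof (induction k rule: dec_induct)
    case base then show ?case by simp
  next
    case (step k) then show ?case using nonnull(5)[OF nn[of k]] by simp
  qed
  define R where "R = r N"
  have Rp: "R > 0" using pos R_def by auto
  have ndR: "norm (d k) > R" if "k \<ge> N" for k
    using nonnull(1)[OF nn[OF that]] rc[OF that] R_def by simp
  have bp: "(1 - \<beta>) * R / 2 > 0" using params Rp by simp
  obtain \<delta> where dp: "\<delta> > 0" and dd: "\<forall>y. dist y xbar < \<delta> \<longrightarrow> dist (grad y) (grad xbar) < (1 - \<beta>) * R / 2"
    using contg[of xbar] bp unfolding continuous_at_eps_delta by blast
  define e1 where "e1 = min (\<delta>/2) (min R (\<gamma> * \<delta> / 2) / 2)"
  have e1p: "e1 > 0" using dp Rp params unfolding e1_def by simp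
  have e1d: "e1 \<le> \<delta> / 2" unfolding e1_def by simp
  obtain M where M: "\<forall>k\<ge>M. norm (x k - xbar) < e1" using LIMSEQ_D[OF xl e1p] by blast
  define k where "k = max M N"
  have xk: "norm (x k - xbar) < e1" using M k_def by simp
  have xk1: "norm (x (Suc k) - xbar) < e1" using M k_def by simp
  have "norm (x (Suc k) - x k) \<le> norm (x (Suc k) - xbar) + norm (x k - xbar)"
    using norm_triangle_ineq4[of "x (Suc k) - xbar" "x k - xbar"] by simp
  then have stp: "norm (x (Suc k) - x k) < min R (\<gamma> * \<delta> / 2)"
    using xk xk1 unfolding e1_def by linarith
  have dk: "d k \<noteq> 0" using nn k_def by simp
  define nd where "nd = norm (d k)"
  have ndR': "nd > R" using ndR k_def nd_def by simp
  have tk: "0 < t k" "t k \<le> 1" using tpos by auto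
  have nx: "norm (x (Suc k) - x k) = t k * nd" using xstep[of k] tk nd_def by simp
  have tnR: "t k * nd < R" and tnd: "t k * nd < \<gamma> * \<delta> / 2" using stp nx by auto
  have tl1: "t k < 1"
  proof (rule ccontr)
    assume "\<not> t k < 1"
    then have "t k * nd \<ge> nd" using ndR' Rp by simp
    then show False using tnR ndR' by simp
  qed
  obtain j where j: "t k = \<gamma> ^ j" and nota: "\<forall>i<j. \<not> armijo f \<beta> (x k) (d k) (\<gamma> ^ i)"
    using tc[of k] dk by auto
  have "j \<noteq> 0"
  proof
    assume "j = 0"
    then have "t k = 1" using j by simp
    then show False using tl1 by simp
  qed
  then obtain i where ji: "j = Suc i" using not0_implies_Suc by blast
  define sv where "sv = \<gamma> ^ i"
  have svp: "sv > 0" using params sv_def by simp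
  have tks: "t k = \<gamma> * sv" using j ji sv_def by simp
  have na: "\<not> armijo f \<beta> (x k) (d k) sv" using nota ji sv_def by simp
  then have fgt: "f (x k + sv *\<^sub>R d k) - f (x k) > - (\<beta> * sv * nd^2)"
    unfolding armijo_def nd_def by simp
  define ph where "ph u = f (x k + u *\<^sub>R d k)" for u
  have phd: "(ph has_field_derivative (grad (x k + z *\<^sub>R d k) \<bullet> d k)) (at z)" for z
    unfolding ph_def by (rule fderiv_line)
  have cph: "continuous_on {0..sv} ph"
    by (rule DERIV_continuous_on[of _ _ "\<lambda>z. grad (x k + z *\<^sub>R d k) \<bullet> d k"])
       (rule has_field_derivative_at_within[OF phd])
  have dph: "ph differentiable (at z)" for z
    using phd real_differentiable_def by blast
  obtain l z where z: "0 < z" "z < sv" and lz: "DERIV ph z :> l" and mv: "ph sv - ph 0 = (sv - 0) * l"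
    using MVT[OF svp cph dph] by blast
  define y where "y = x k + z *\<^sub>R d k"
  have l: "l = grad y \<bullet> d k" using DERIV_unique[OF lz phd[of z]] y_def by simp
  have "sv * (grad y \<bullet> d k) > - (\<beta> * sv * nd^2)"
    using mv fgt l unfolding ph_def by simp
  then have "sv * (grad y \<bullet> d k) > sv * (- (\<beta> * nd^2))" by (simp add: algebra_simps)
  then have gy: "grad y \<bullet> d k > - (\<beta> * nd^2)" using svp mult_less_cancel_left_pos by blast
  have gx: "grad (x k) \<bullet> d k \<le> - (nd^2)" using nonnull(3)[OF dk] nd_def by simp
  have "(grad y - grad (x k)) \<bullet> d k > (1 - \<beta>) * nd^2"
    using gy gx by (simp add: inner_diff_left algebra_simps)
  moreover have "(grad y - grad (x k)) \<bullet> d k \<le> norm (grad y - grad (x k)) * nd"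
    using norm_cauchy_schwarz nd_def by blast
  moreover have "norm (grad y - grad (x k)) < (1 - \<beta>) * R"
  proof -
    have "norm (y - x k) = z * nd" using y_def z nd_def by simp
    also have "\<dots> < sv * nd" using z ndR' Rp by simp
    also have "\<dots> < \<delta> / 2" using tnd tks params by (simp add: field_simps)
    finally have "norm (y - x k) < \<delta> / 2" .
    then have "norm (y - xbar) < \<delta>"
      using xk norm_triangle_ineq[of "y - x k" "x k - xbar"] e1d by simp
    then have a1: "dist (grad y) (grad xbar) < (1 - \<beta>) * R / 2" using dd by (simp add: dist_norm)
    have "norm (x k - xbar) < \<delta>" using xk e1d dp by linarith
    then have a2: "dist (grad (x k)) (grad xbar) < (1 - \<beta>) * R / 2" using dd by (simp add: dist_norm)
    have "dist (grad y) (grad (x k)) \<le> dist (grad y) (grad xbar) + dist (grad (x k)) (grad xbar)"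
      by (rule dist_triangle2)
    then show ?thesis using a1 a2 by (simp add: dist_norm)
  qed
  ultimately have "(1 - \<beta>) * nd^2 < (1 - \<beta>) * R * nd"
    using ndR' Rp by (smt (verit) mult_right_mono)
  moreover have "(1 - \<beta>) * R * nd < (1 - \<beta>) * nd^2"
    using ndR' Rp params by (simp add: power2_eq_square)
  ultimately show False by simp
qed

lemma grad0:
  assumes xl: "x \<longlonglongrightarrow> xbar"
  shows "grad xbar = 0"
proof (rule ccontr)
  assume ne: "grad xbar \<noteq> 0"
  define e where "e = norm (grad xbar)"
  have ep: "e > 0" using ne e_def by simp
  define B where "B = r 0 + 2 * \<epsilon> 0"
  have Bp: "B > 0" using params B_def by simp
  have rs: "\<exists>k. r k + 2 * \<epsilon> k \<le> B * \<mu> ^ n" for n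
  proof (induction n)
    case 0 then show ?case using B_def by (intro exI[of _ 0]) simp
  next
    case (Suc n)
    then obtain k where k: "r k + 2 * \<epsilon> k \<le> B * \<mu> ^ n" by blast
    obtain m where m: "m \<ge> k" "d m = 0" using infnull[OF xl] by blast
    then have "norm (g m) \<le> r m + \<epsilon> m" using null_iff by simp
    then have st: "r (Suc m) = \<mu> * r m" "\<epsilon> (Suc m) = \<theta> * \<epsilon> m" using stepc[of m] by auto
    have "\<theta> * \<epsilon> m \<le> \<mu> * \<epsilon> m" using thmu pos[of m] by simp
    then have "r (Suc m) + 2 * \<epsilon> (Suc m) \<le> \<mu> * (r m + 2 * \<epsilon> m)" using st by (simp add: algebra_simps)
    also have "\<dots> \<le> \<mu> * (r k + 2 * \<epsilon> k)" using rmono[OF m(1)] params by simp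
    also have "\<dots> \<le> \<mu> * (B * \<mu> ^ n)" using k params by simp
    finally show ?case by (intro exI[of _ "Suc m"]) (simp add: algebra_simps)
  qed
  have "e / 2 / B > 0" using ep Bp by simp
  then obtain n where n: "\<mu> ^ n < e / 2 / B" using real_arch_pow_inv params by blast
  obtain k0 where k0: "r k0 + 2 * \<epsilon> k0 \<le> B * \<mu> ^ n" using rs by blast
  have "B * \<mu> ^ n < e / 2" using n Bp by (simp add: field_simps)
  then have k0': "r k0 + 2 * \<epsilon> k0 < e / 2" using k0 by linarith
  have gl: "(\<lambda>k. grad (x k)) \<longlonglongrightarrow> grad xbar" using isCont_tendsto_compose[OF contg xl] .
  have e2: "e / 2 > 0" using ep by simp
  obtain M1 where M1: "\<forall>k\<ge>M1. norm (grad (x k) - grad xbar) < e / 2" using LIMSEQ_D[OF gl e2] by blast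
  obtain m where m: "m \<ge> max k0 M1" "d m = 0" using infnull[OF xl] by blast
  have "norm (g m) \<le> r m + \<epsilon> m" using null_iff m by simp
  moreover have "norm (grad (x m)) \<le> norm (g m) + \<epsilon> m"
    using norm_triangle_ineq[of "g m" "grad (x m) - g m"] gerr[of m]
    by (simp add: norm_minus_commute)
  moreover have "r m + 2 * \<epsilon> m \<le> r k0 + 2 * \<epsilon> k0" using rmono[of k0 m] m by simp
  ultimately have a: "norm (grad (x m)) < e / 2" using k0' by linarith
  have "e \<le> norm (grad (x m)) + norm (grad (x m) - grad xbar)"
    using norm_triangle_ineq4[of "grad (x m)" "grad (x m) - grad xbar"] e_def by simp
  then show False using a M1 m by force
qed

end


theorem mainTheorem13:
  fixes f :: "'a::euclidean_space \<Rightarrow> real" and grad :: "'a \<Rightarrow> 'a"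
    and x g d :: "nat \<Rightarrow> 'a" and \<epsilon> r t \<rho> :: "nat \<Rightarrow> real"
    and \<mu> \<theta> \<beta> \<gamma> \<tau> :: real and xbar :: 'a
  assumes "C1_with_gradient f grad"
    and "IRG_backtracking f grad \<mu> \<theta> \<beta> \<gamma> \<tau> \<rho> x g \<epsilon> r d t"
    and "\<theta> < \<mu>"
    and "\<rho> \<longlonglongrightarrow> 0"
    and "\<exists>s::nat \<Rightarrow> nat. strict_mono s \<and> (x \<circ> s) \<longlonglongrightarrow> xbar"
    and "KL_property f grad xbar"
  shows "grad xbar = 0 \<and> x \<longlonglongrightarrow> xbar"
proof -
  interpret irg f grad x g d \<epsilon> r t \<rho> \<mu> \<theta> \<beta> \<gamma> \<tau>
    using assms(1-3) by unfold_locales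
  obtain s :: "nat \<Rightarrow> nat" where s: "strict_mono s" "(x \<circ> s) \<longlonglongrightarrow> xbar" using assms(5) by blast
  have xl: "x \<longlonglongrightarrow> xbar" by (rule conv[OF s assms(6)])
  show ?thesis using grad0[OF xl] xl by simp
qed

end
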